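(* Let $r_1,r_2\ge 2$ and let $q_1,q_2\ge1$ be integers with $\gcd(q_1,r_2)=1$ and $\gcd(q_2,r_1)=1$. If $P=(P_1,P_2)=\sum_{\delta\in\mathbb{N}}(c_{1,\delta},c_{2,\delta})\binom{X}{\delta}\in(\mathbb{Z}_{r_1}\times\mathbb{Z}_{r_2})\binom{X}{\mathbb{Z}}$ is $q_1q_2$-periodic, then $$\check P:=(P_1(X_1),P_2(X_2))=\sum_{\delta}(c_{1,\delta},0)\binom{X_1}{\delta}+\sum_\delta(0,c_{2,\delta})\binom{X_2}{\delta}$$ is $(q_1,q_2)$-periodic, and $P\mapsto\check P$ is a ring isomorphism $$(\mathbb{Z}_{r_1}\times\mathbb{Z}_{r_2})\binom{X}{\mathbb{Z}_{q_1q_2}}\longrightarrow(\mathbb{Z}_{r_1}\times\mathbb{Z}_{r_2})\binom{X_1,X_2}{\mathbb{Z}_{q_1}\times\mathbb{Z}_{q_2}}$$ whose inverse is $Q\mapsto Q|_{X_1:=X,\,X_2:=X}$. If moreover $\gcd(q_1,q_2)=1$ and $\vartheta:\mathbb{Z}_{q_1q_2}\to\mathbb{Z}_{q_1}\times\mathbb{Z}_{q_2}$, $x+q_1q_2\mathbb{Z}\mapsto(x+q_1\mathbb{Z},x+q_2\mathbb{Z})$, then as maps $\check P=P\circ\vartheta^{-1}$ and $Q|_{X_1:=X,X_2:=X}=Q\circ\vartheta$.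
   Context: Notation: $\mathbb{Z}_r=\mathbb{Z}/r\mathbb{Z}$. $\binom{X}{\delta}=X(X-1)\cdots(X-\delta+1)/\delta!$, $\binom{X}{0}=1$. For $r\ge0$, $\mathbb{Z}\binom{X_1,\dots,X_n}{\mathbb{Z}^n}$ is the ring of integer linear combinations of products $\prod_j\binom{X_j}{\delta_j}$ (a subring of $\mathbb{Q}[X_1,\dots,X_n]$), and $\mathbb{Z}_r\binom{X_1,\dots,X_n}{\mathbb{Z}^n}$ is the quotient ring $\mathbb{Z}\binom{X_1,\dots,X_n}{\mathbb{Z}^n}/r\mathbb{Z}\binom{X_1,\dots,X_n}{\mathbb{Z}^n}$, i.e. formal sums $\sum_\delta P_\delta\prod_j\binom{X_j}{\delta_j}$ with $P_\delta\in\mathbb{Z}_r$, evaluated at integer points with values in $\mathbb{Z}_r$. For $B=\mathbb{Z}_{r_1}\times\mathbb{Z}_{r_2}$, $B$-polyfracts are pairs of such polyfracts with componentwise ring operations. For positive integers $q_j$, $B\binom{X_1,\dots,X_n}{\mathbb{Z}_{q_1}\times\cdots\times\mathbb{Z}_{q_n}}$ is the subring of those polyfracts whose evaluation map on $\mathbb{Z}^n$ is $q_j$-periodic in the $j$-th variable for each $j$ (such maps are identified with maps on $\mathbb{Z}_{q_1}\times\cdots\times\mathbb{Z}_{q_n}$). *)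

theory Defs
  imports "HOL-Computational_Algebra.Polynomial"
begin

text \<open>Polyfracts are represented by rational polynomials (Z-binomial polyfracts are a
subring of Q[X]); bivariate ones live in Q[X1][X2] = rat poly poly, where the inner
variable is X1 and the outer variable is X2. Elements of the quotient ring
Z_r binom(...) are represented by representatives, with congruence modulo r.\<close>

definition binpoly :: "nat \<Rightarrow> rat poly" where
  "binpoly d = smult (1 / fact d) (\<Prod>i<d. [:- of_nat i, 1:])"

definition binpoly2 :: "nat \<Rightarrow> nat \<Rightarrow> rat poly poly" where
  "binpoly2 a b = [:binpoly a:] * map_poly (\<lambda>u. [:u:]) (binpoly b)"

definition Zbinom1 :: "rat poly set" where
  "Zbinom1 = {f. \<exists>(c::nat \<Rightarrow> int) N. f = (\<Sum>d<N. smult (of_int (c d)) (binpoly d))}"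

definition Zbinom2 :: "rat poly poly set" where
  "Zbinom2 = {F. \<exists>(c::nat \<Rightarrow> nat \<Rightarrow> int) N.
      F = (\<Sum>a<N. \<Sum>b<N. smult [:of_int (c a b):] (binpoly2 a b))}"

definition cong1 :: "int \<Rightarrow> rat poly \<Rightarrow> rat poly \<Rightarrow> bool" where
  "cong1 r f g \<longleftrightarrow> smult (1 / of_int r) (f - g) \<in> Zbinom1"

definition cong2 :: "int \<Rightarrow> rat poly poly \<Rightarrow> rat poly poly \<Rightarrow> bool" where
  "cong2 r F G \<longleftrightarrow> smult [:1 / of_int r:] (F - G) \<in> Zbinom2"

definition ev1 :: "rat poly \<Rightarrow> int \<Rightarrow> rat" where
  "ev1 f x = poly f (of_int x)"

definition ev2 :: "rat poly poly \<Rightarrow> int \<Rightarrow> int \<Rightarrow> rat" where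
  "ev2 F x1 x2 = poly (poly F [:of_int x2:]) (of_int x1)"

definition vcong :: "int \<Rightarrow> rat \<Rightarrow> rat \<Rightarrow> bool" where
  "vcong r a b \<longleftrightarrow> (a - b) / of_int r \<in> \<int>"

definition per1 :: "int \<Rightarrow> int \<Rightarrow> rat poly \<Rightarrow> bool" where
  "per1 r q f \<longleftrightarrow> (\<forall>x. vcong r (ev1 f (x + q)) (ev1 f x))"

definition per2 :: "int \<Rightarrow> int \<Rightarrow> int \<Rightarrow> rat poly poly \<Rightarrow> bool" where
  "per2 r q1 q2 F \<longleftrightarrow>
     (\<forall>x1 x2. vcong r (ev2 F (x1 + q1) x2) (ev2 F x1 x2)
            \<and> vcong r (ev2 F x1 (x2 + q2)) (ev2 F x1 x2))"

text \<open>(Z_r1 x Z_r2) binom(X, Z_q) and (Z_r1 x Z_r2) binom(X1,X2, Z_q1 x Z_q2), as sets of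
representatives\<close>
definition dom1 :: "int \<Rightarrow> int \<Rightarrow> int \<Rightarrow> (rat poly \<times> rat poly) set" where
  "dom1 r1 r2 q = {(P1, P2). P1 \<in> Zbinom1 \<and> P2 \<in> Zbinom1 \<and> per1 r1 q P1 \<and> per1 r2 q P2}"

definition dom2 :: "int \<Rightarrow> int \<Rightarrow> int \<Rightarrow> int \<Rightarrow> (rat poly poly \<times> rat poly poly) set" where
  "dom2 r1 r2 q1 q2 = {(Q1, Q2). Q1 \<in> Zbinom2 \<and> Q2 \<in> Zbinom2
       \<and> per2 r1 q1 q2 Q1 \<and> per2 r2 q1 q2 Q2}"

definition Bcong1 :: "int \<Rightarrow> int \<Rightarrow> rat poly \<times> rat poly \<Rightarrow> rat poly \<times> rat poly \<Rightarrow> bool" where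
  "Bcong1 r1 r2 P P' \<longleftrightarrow> cong1 r1 (fst P) (fst P') \<and> cong1 r2 (snd P) (snd P')"

definition Bcong2 :: "int \<Rightarrow> int \<Rightarrow> rat poly poly \<times> rat poly poly
    \<Rightarrow> rat poly poly \<times> rat poly poly \<Rightarrow> bool" where
  "Bcong2 r1 r2 Q Q' \<longleftrightarrow> cong2 r1 (fst Q) (fst Q') \<and> cong2 r2 (snd Q) (snd Q')"

definition padd :: "'a::plus \<times> 'b::plus \<Rightarrow> 'a \<times> 'b \<Rightarrow> 'a \<times> 'b" where
  "padd P P' = (fst P + fst P', snd P + snd P')"

definition pmul :: "'a::times \<times> 'b::times \<Rightarrow> 'a \<times> 'b \<Rightarrow> 'a \<times> 'b" where
  "pmul P P' = (fst P * fst P', snd P * snd P')"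

text \<open>P |-> (P1(X1), P2(X2))\<close>
definition check :: "rat poly \<times> rat poly \<Rightarrow> rat poly poly \<times> rat poly poly" where
  "check P = ([:fst P:], map_poly (\<lambda>u. [:u:]) (snd P))"

text \<open>Q |-> Q|_{X1:=X, X2:=X}\<close>
definition restr :: "rat poly poly \<times> rat poly poly \<Rightarrow> rat poly \<times> rat poly" where
  "restr Q = (poly (fst Q) [:0, 1:], poly (snd Q) [:0, 1:])"

end

theory Submission
  imports Defs
begin


lemma poly_mapC: "poly (map_poly (\<lambda>u. [:u:]) p) q = pcompose p q"
  by (induction p) (simp_all add: map_poly_pCons pcompose_pCons)

lemma ev2_const[simp]: "ev2 [:f:] x1 x2 = ev1 f x1"
  by (simp add: ev2_def ev1_def)

lemma ev2_mapC[simp]: "ev2 (map_poly (\<lambda>u. [:u:]) f) x1 x2 = ev1 f x2"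
  by (simp add: ev2_def ev1_def poly_mapC poly_pcompose)

lemma poly_poly_hom: "poly (poly F q) x = poly (poly F [:poly q x:]) x"
  by (induction F) simp_all

lemma poly_poly_map: "poly (poly F [:c:]) x = poly (map_poly (\<lambda>q. poly q x) F) c"
  by (induction F) (simp_all add: map_poly_pCons)

lemma ev1_restr: "ev1 (poly F [:0,1:]) x = ev2 F x x"
  unfolding ev1_def ev2_def by (subst poly_poly_hom) simp

lemma ev2_as_ev1: "ev2 F x1 x2 = ev1 (map_poly (\<lambda>q. poly q (of_int x1)) F) x2"
  unfolding ev1_def ev2_def by (rule poly_poly_map)

lemma ev2_add[simp]: "ev2 (F + G) x1 x2 = ev2 F x1 x2 + ev2 G x1 x2"
  and ev2_diff[simp]: "ev2 (F - G) x1 x2 = ev2 F x1 x2 - ev2 G x1 x2"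
  and ev2_mult[simp]: "ev2 (F * G) x1 x2 = ev2 F x1 x2 * ev2 G x1 x2"
  and ev2_one[simp]: "ev2 1 x1 x2 = 1"
  and ev2_smult[simp]: "ev2 (smult [:c:] F) x1 x2 = c * ev2 F x1 x2"
  by (simp_all add: ev2_def)

lemma ev1_add[simp]: "ev1 (F + G) x = ev1 F x + ev1 G x"
  and ev1_diff[simp]: "ev1 (F - G) x = ev1 F x - ev1 G x"
  and ev1_mult[simp]: "ev1 (F * G) x = ev1 F x * ev1 G x"
  and ev1_one[simp]: "ev1 1 x = 1"
  and ev1_smult[simp]: "ev1 (smult c F) x = c * ev1 F x"
  by (simp_all add: ev1_def)



definition Dsh :: "'a::comm_ring_1 \<Rightarrow> 'a poly \<Rightarrow> 'a poly" where
  "Dsh c p = pcompose p [:c,1:] - p"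

lemma poly_Dsh[simp]: "poly (Dsh c p) y = poly p (y + c) - poly p y"
  by (simp add: Dsh_def poly_pcompose add.commute)

lemma Dsh_0[simp]: "Dsh c 0 = 0"
  by (simp add: Dsh_def)

lemma Dsh_pow_0[simp]: "(Dsh c ^^ n) 0 = 0"
  by (induction n) simp_all

lemma Dsh_deg0:
  fixes p :: "'a::idom poly"
  assumes "degree p = 0" shows "Dsh c p = 0"
proof -
  from assms obtain a where "p = [:a:]" by (metis degree_eq_zeroE)
  then show ?thesis by (simp add: Dsh_def)
qed

lemma Dsh_deg_less:
  fixes p :: "'a::idom poly"
  assumes "degree p > 0" shows "degree (Dsh c p) < degree p"
proof -
  have d: "degree (pcompose p [:c,1:]) = degree p"
    by (simp add: degree_pcompose)
  have l: "lead_coeff (pcompose p [:c,1:]) = lead_coeff p"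
    using lead_coeff_comp[of "[:c,1:]" p] by simp
  have le: "degree (Dsh c p) \<le> degree p"
    unfolding Dsh_def using degree_diff_le[of "pcompose p [:c,1:]" "degree p" p] d by simp
  have z: "coeff (Dsh c p) (degree p) = 0"
    unfolding Dsh_def using d l by simp
  show ?thesis
  proof (rule ccontr)
    assume "\<not> ?thesis"
    with le have e: "degree (Dsh c p) = degree p" by simp
    with z have "lead_coeff (Dsh c p) = 0" by simp
    then have "Dsh c p = 0" by simp
    then show False using e assms by simp
  qed
qed

lemma Dsh_pow_vanish:
  fixes p :: "'a::idom poly"
  shows "degree p < n \<Longrightarrow> (Dsh c ^^ n) p = 0"
proof (induction n arbitrary: p)
  case 0 then show ?case by simp
next
  case (Suc n)
  have eq: "(Dsh c ^^ Suc n) p = (Dsh c ^^ n) (Dsh c p)"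
    by (simp add: funpow_Suc_right del: funpow.simps)
  show ?case
  proof (cases "degree p = 0")
    case True then show ?thesis by (simp only: eq Dsh_deg0[OF True] Dsh_pow_0)
  next
    case False
    then have "degree (Dsh c p) < n" using Dsh_deg_less[of p c] Suc.prems by simp
    then show ?thesis using eq Suc.IH by simp
  qed
qed

lemma pascal_sum:
  fixes a :: "nat \<Rightarrow> 'a::comm_ring_1"
  shows "(\<Sum>d\<le>x. of_nat (x choose d) * (a (Suc d) + a d)) =
         (\<Sum>d\<le>Suc x. of_nat (Suc x choose d) * a d)"
proof -
  have 1: "(\<Sum>d\<le>Suc x. of_nat (Suc x choose d) * a d) =
      a 0 + (\<Sum>d\<le>x. of_nat (x choose d) * a (Suc d)) + (\<Sum>d\<le>x. of_nat (x choose Suc d) * a (Suc d))"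
    by (simp add: sum.atMost_Suc_shift del: sum.atMost_Suc binomial_Suc_Suc)
       (simp add: binomial_Suc_Suc distrib_right sum.distrib)
  have 2: "(\<Sum>d\<le>x. of_nat (x choose d) * a d) = (\<Sum>d\<le>Suc x. of_nat (x choose d) * a d)"
    by (simp add: binomial_eq_0)
  also have "\<dots> = a 0 + (\<Sum>d\<le>x. of_nat (x choose Suc d) * a (Suc d))"
    by (simp add: sum.atMost_Suc_shift del: sum.atMost_Suc)
  finally show ?thesis using 1 by (simp add: distrib_left sum.distrib)
qed

lemma newton_pt:
  fixes p :: "'a::comm_ring_1 poly"
  shows "poly p (y + of_nat x) = (\<Sum>d\<le>x. of_nat (x choose d) * poly ((Dsh 1 ^^ d) p) y)"
proof (induction x arbitrary: y)
  case 0 then show ?case by simp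
next
  case (Suc x)
  have "poly p (y + of_nat (Suc x)) = poly p ((y + 1) + of_nat x)"
    by (simp add: algebra_simps)
  also have "\<dots> = (\<Sum>d\<le>x. of_nat (x choose d) * poly ((Dsh 1 ^^ d) p) (y + 1))"
    by (rule Suc.IH)
  also have "\<dots> = (\<Sum>d\<le>x. of_nat (x choose d) *
       (poly ((Dsh 1 ^^ Suc d) p) y + poly ((Dsh 1 ^^ d) p) y))"
    by (intro sum.cong refl) simp
  also have "\<dots> = (\<Sum>d\<le>Suc x. of_nat (Suc x choose d) * poly ((Dsh 1 ^^ d) p) y)"
    by (rule pascal_sum[where a = "\<lambda>d. poly ((Dsh 1 ^^ d) p) y"])
  finally show ?case .
qed

lemma newton:
  fixes p :: "'a::{idom,ring_char_0} poly"
  assumes hB: "\<And>d x. poly (B d) (of_nat x) = of_nat (x choose d)"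
  shows "p = (\<Sum>d\<le>degree p. smult (poly ((Dsh 1 ^^ d) p) 0) (B d))"
proof -
  define q where "q = (\<Sum>d\<le>degree p. smult (poly ((Dsh 1 ^^ d) p) 0) (B d))"
  have ev: "poly (p - q) (of_nat x) = 0" for x
  proof -
    let ?a = "\<lambda>d. poly ((Dsh 1 ^^ d) p) 0"
    have z: "?a d = 0" if "d > degree p" for d
      using Dsh_pow_vanish[of p d 1] that by simp
    have "poly q (of_nat x) = (\<Sum>d\<le>degree p. ?a d * of_nat (x choose d))"
      by (simp add: q_def poly_sum hB)
    also have "\<dots> = (\<Sum>d\<le>degree p + x. ?a d * of_nat (x choose d))"
      by (rule sum.mono_neutral_left) (auto simp: z)
    also have "\<dots> = (\<Sum>d\<le>x. ?a d * of_nat (x choose d))"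
      by (rule sum.mono_neutral_right) (auto simp: binomial_eq_0)
    also have "\<dots> = poly p (0 + of_nat x)"
      by (subst newton_pt) (simp add: mult.commute)
    finally show ?thesis by simp
  qed
  have "p - q = 0"
  proof (rule ccontr)
    assume "p - q \<noteq> 0"
    then have "finite {z. poly (p - q) z = 0}" by (rule poly_roots_finite)
    moreover have "range (of_nat :: nat \<Rightarrow> 'a) \<subseteq> {z. poly (p - q) z = 0}"
      using ev by auto
    moreover have "infinite (range (of_nat :: nat \<Rightarrow> 'a))"
      using range_inj_infinite[of "of_nat :: nat \<Rightarrow> 'a"] inj_of_nat by blast
    ultimately show False using finite_subset by blast
  qed
  then show ?thesis unfolding q_def by simp
qed



lemma poly_binpoly: "poly (binpoly d) z = z gchoose d"
  by (simp add: binpoly_def gbinomial_prod_rev poly_prod atLeast0LessThan)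

lemma binpoly_nat: "poly (binpoly d) (of_nat x) = of_nat (x choose d)"
  by (simp add: poly_binpoly binomial_gbinomial)

lemma binpoly_Ints: "poly (binpoly d) (of_int x) \<in> \<int>"
proof (cases "x \<ge> 0")
  case True
  then have "(of_int x :: rat) = of_nat (nat x)" by simp
  then show ?thesis by (metis binpoly_nat Ints_of_nat)
next
  case False
  define m where "m = nat (-x)"
  have m1: "m \<ge> 1" using False unfolding m_def by linarith
  have "int m = - x" using False unfolding m_def by linarith
  then have m2: "(of_int x :: rat) = - of_nat m" by (metis minus_minus of_int_minus of_int_of_nat_eq)
  note m = m1 m2
  have e: "(of_nat m + of_nat d - 1 :: rat) = of_nat (m + d - 1)" using m1 by (simp add: of_nat_diff)
  have "poly (binpoly d) (of_int x) = (- of_nat m) gchoose d" 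
    unfolding m(2) poly_binpoly ..
  also have "\<dots> = (-1)^d * ((of_nat m + of_nat d - 1) gchoose d)" by (rule gbinomial_minus)
  also have "\<dots> = (-1)^d * of_nat ((m + d - 1) choose d)" unfolding e binomial_gbinomial ..
  finally show ?thesis by simp
qed
definition iv1 :: "rat poly \<Rightarrow> bool" where "iv1 f \<longleftrightarrow> (\<forall>x. ev1 f x \<in> \<int>)"
definition iv2 :: "rat poly poly \<Rightarrow> bool" where "iv2 F \<longleftrightarrow> (\<forall>x1 x2. ev2 F x1 x2 \<in> \<int>)"

lemma ev1_Dsh: "ev1 (Dsh 1 f) x = ev1 f (x + 1) - ev1 f x"
  by (simp add: ev1_def)

lemma iv1_Dsh_pow: "iv1 f \<Longrightarrow> iv1 ((Dsh 1 ^^ d) f)"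
  by (induction d) (auto simp: iv1_def ev1_Dsh)

lemma ev2_Dsh: "ev2 (Dsh 1 F) x1 x2 = ev2 F x1 (x2 + 1) - ev2 F x1 x2"
  by (simp add: ev2_def one_pCons)

lemma iv2_Dsh_pow: "iv2 F \<Longrightarrow> iv2 ((Dsh 1 ^^ d) F)"
  by (induction d) (auto simp: iv2_def ev2_Dsh)

lemma Zbinom1_iv1: assumes "f \<in> Zbinom1" shows "iv1 f"
proof -
  obtain c N where f: "f = (\<Sum>d<N. smult (of_int (c d)) (binpoly d))"
    using assms unfolding Zbinom1_def by blast
  have "ev1 f x = (\<Sum>d<N. of_int (c d) * ev1 (binpoly d) x)" for x
    by (simp add: f ev1_def poly_sum)
  moreover have "ev1 (binpoly d) x \<in> \<int>" for d x using binpoly_Ints by (simp add: ev1_def)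
  ultimately show ?thesis unfolding iv1_def by (simp add: Ints_sum Ints_mult)
qed

lemma iv1_Zbinom1: assumes "iv1 f" shows "f \<in> Zbinom1"
proof -
  let ?a = "\<lambda>d. poly ((Dsh 1 ^^ d) f) 0"
  have ai: "?a d \<in> \<int>" for d
    using iv1_Dsh_pow[OF assms, of d] unfolding iv1_def ev1_def by (metis of_int_0)
  define c where "c d = \<lfloor>?a d\<rfloor>" for d
  have c: "of_int (c d) = ?a d" for d using ai[of d] by (auto simp: c_def elim!: Ints_cases)
  have "f = (\<Sum>d\<le>degree f. smult (?a d) (binpoly d))"
    by (rule newton) (simp add: binpoly_nat)
  also have "\<dots> = (\<Sum>d<Suc (degree f). smult (of_int (c d)) (binpoly d))"
    by (simp add: c lessThan_Suc_atMost)
  finally show ?thesis unfolding Zbinom1_def by blast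
qed

lemma Zbinom1_iff: "f \<in> Zbinom1 \<longleftrightarrow> iv1 f"
  using Zbinom1_iv1 iv1_Zbinom1 by blast

lemma ev2_smult_gen[simp]: "ev2 (smult p F) x1 x2 = ev1 p x1 * ev2 F x1 x2"
  by (simp add: ev2_def ev1_def)

lemma ev2_binpoly2: "ev2 (binpoly2 a b) x1 x2 = ev1 (binpoly a) x1 * ev1 (binpoly b) x2"
  by (simp add: binpoly2_def)

lemma Zbinom2_iv2: assumes "F \<in> Zbinom2" shows "iv2 F"
proof -
  obtain c N where f: "F = (\<Sum>a<N. \<Sum>b<N. smult [:of_int (c a b):] (binpoly2 a b))"
    using assms unfolding Zbinom2_def by blast
  have "ev2 F x1 x2 = (\<Sum>a<N. \<Sum>b<N. of_int (c a b) * (ev1 (binpoly a) x1 * ev1 (binpoly b) x2))" for x1 x2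
    by (simp add: f ev2_def poly_sum ev2_binpoly2[unfolded ev2_def])
  moreover have "ev1 (binpoly d) x \<in> \<int>" for d x using binpoly_Ints by (simp add: ev1_def)
  ultimately show ?thesis unfolding iv2_def by (simp add: Ints_sum Ints_mult)
qed



lemma Zbinom2_0: "0 \<in> Zbinom2"
  unfolding Zbinom2_def by (rule CollectI, rule exI[of _ "\<lambda>a b. 0"], rule exI[of _ 0]) simp

lemma sum_if_lt:
  fixes N K :: nat
  assumes "N \<le> K"
  shows "(\<Sum>a<K. if a < N then g a else 0) = (\<Sum>a<N. g a)"
proof -
  have "{..<K} \<inter> {a. a < N} = {..<N}" using assms by auto
  then show ?thesis by (simp add: sum.If_cases)
qed

lemma pad2:
  fixes N K :: nat
  assumes "N \<le> K"
  shows "(\<Sum>a<K. \<Sum>b<K. smult [:of_int (if a < N \<and> b < N then c a b else 0):] (X a b :: rat poly poly)) =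
         (\<Sum>a<N. \<Sum>b<N. smult [:of_int (c a b):] (X a b))"
proof -
  have "(\<Sum>a<K. \<Sum>b<K. smult [:of_int (if a < N \<and> b < N then c a b else 0):] (X a b)) =
        (\<Sum>a<K. if a < N then (\<Sum>b<N. smult [:of_int (c a b):] (X a b)) else 0)"
  proof (intro sum.cong refl)
    fix a assume "a \<in> {..<K}"
    show "(\<Sum>b<K. smult [:of_int (if a < N \<and> b < N then c a b else 0):] (X a b)) =
        (if a < N then (\<Sum>b<N. smult [:of_int (c a b):] (X a b)) else 0)"
    proof (cases "a < N")
      case True
      have "(\<Sum>b<K. smult [:of_int (if a < N \<and> b < N then c a b else 0):] (X a b)) =
            (\<Sum>b<N. smult [:of_int (if a < N \<and> b < N then c a b else 0):] (X a b))"
        using assms by (intro sum.mono_neutral_right) auto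
      then show ?thesis using True by simp
    qed simp
  qed
  also have "\<dots> = (\<Sum>a<N. \<Sum>b<N. smult [:of_int (c a b):] (X a b))"
    using assms by (rule sum_if_lt)
  finally show ?thesis .
qed

lemma smult_pc_add: "smult [:a + b:] X = smult [:a:] X + smult [:b:] X"
  by (metis add_pCons add_0_left smult_add_left)

lemma Zbinom2_add: assumes "F \<in> Zbinom2" "G \<in> Zbinom2" shows "F + G \<in> Zbinom2"
proof -
  obtain c N where F: "F = (\<Sum>a<N. \<Sum>b<N. smult [:of_int (c a b):] (binpoly2 a b))"
    using assms(1) unfolding Zbinom2_def by blast
  obtain c' N' where G: "G = (\<Sum>a<N'. \<Sum>b<N'. smult [:of_int (c' a b):] (binpoly2 a b))"
    using assms(2) unfolding Zbinom2_def by blast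
  define K where "K = max N N'"
  define e where "e a b = (if a < N \<and> b < N then c a b else 0) + (if a < N' \<and> b < N' then c' a b else 0)" for a b
  have "(\<Sum>a<K. \<Sum>b<K. smult [:of_int (e a b):] (binpoly2 a b)) =
     (\<Sum>a<K. \<Sum>b<K. smult [:of_int (if a < N \<and> b < N then c a b else 0):] (binpoly2 a b)) +
     (\<Sum>a<K. \<Sum>b<K. smult [:of_int (if a < N' \<and> b < N' then c' a b else 0):] (binpoly2 a b))"
    unfolding e_def of_int_add smult_pc_add sum.distrib ..
  also have "\<dots> = F + G" unfolding F G K_def by (subst pad2, simp)+ (rule refl)
  finally show ?thesis unfolding Zbinom2_def mem_Collect_eq by (intro exI[of _ e] exI[of _ K]) (rule sym)
qed

lemma Zbinom2_sum: "(\<And>b. b \<le> (n::nat) \<Longrightarrow> G b \<in> Zbinom2) \<Longrightarrow> (\<Sum>b\<le>n. G b) \<in> Zbinom2"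
  by (induction n) (auto intro: Zbinom2_add)

lemma Zbinom2_row: "(\<Sum>a<N. smult [:of_int (c a):] (binpoly2 a b)) \<in> Zbinom2"
proof -
  define K where "K = max N (Suc b)"
  define e where "e a b' = (if a < N \<and> b' = b then c a else 0)" for a b'
  have "(\<Sum>a<K. \<Sum>b'<K. smult [:of_int (e a b'):] (binpoly2 a b')) =
        (\<Sum>a<K. if a < N then smult [:of_int (c a):] (binpoly2 a b) else 0)"
  proof (intro sum.cong refl)
    fix a assume "a \<in> {..<K}"
    have "(\<Sum>b'<K. smult [:of_int (e a b'):] (binpoly2 a b')) =
          (\<Sum>b'<K. if b' = b then (if a < N then smult [:of_int (c a):] (binpoly2 a b) else 0) else 0)"
      by (intro sum.cong refl) (auto simp: e_def)
    also have "\<dots> = (if a < N then smult [:of_int (c a):] (binpoly2 a b) else 0)"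
      by (simp add: K_def less_max_iff_disj)
    finally show "(\<Sum>b'<K. smult [:of_int (e a b'):] (binpoly2 a b')) =
        (if a < N then smult [:of_int (c a):] (binpoly2 a b) else 0)" .
  qed
  also have "\<dots> = (\<Sum>a<N. smult [:of_int (c a):] (binpoly2 a b))"
    by (rule sum_if_lt) (simp add: K_def)
  finally show ?thesis unfolding Zbinom2_def mem_Collect_eq by (intro exI[of _ e] exI[of _ K]) (rule sym)
qed

lemma smult_smult_mapC: "smult (smult k P) Q = smult [:k:] (smult P Q)"
  by (rule poly_eqI) (simp add: mult.assoc)

lemma iv2_Zbinom2: assumes "iv2 F" shows "F \<in> Zbinom2"
proof -
  let ?B = "\<lambda>b. map_poly (\<lambda>u. [:u:]) (binpoly b)"
  let ?C = "\<lambda>b. poly ((Dsh 1 ^^ b) F) 0"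
  have hB: "poly (?B b) (of_nat x) = of_nat (x choose b)" for b x
    by (simp add: poly_mapC of_nat_poly pcompose_pCons_0 binpoly_nat)
  have F: "F = (\<Sum>b\<le>degree F. smult (?C b) (?B b))"
    by (rule newton) (rule hB)
  have "iv1 (?C b)" for b
    using iv2_Dsh_pow[OF assms, of b] unfolding iv2_def iv1_def ev2_def ev1_def
    by (metis of_int_0 pCons_0_0)
  then have "?C b \<in> Zbinom1" for b by (simp add: Zbinom1_iff)
  then have ex: "\<exists>c N. ?C b = (\<Sum>a<N. smult (of_int (c a)) (binpoly a))" for b
    unfolding Zbinom1_def by blast
  then have "smult (?C b) (?B b) \<in> Zbinom2" for b
  proof -
    obtain c N where e: "?C b = (\<Sum>a<N. smult (of_int (c a)) (binpoly a))"
      using ex[of b] by blast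
    have "smult (?C b) (?B b) = (\<Sum>a<N. smult [:of_int (c a):] (binpoly2 a b))"
      unfolding e smult_sum smult_smult_mapC binpoly2_def by (intro sum.cong refl) simp
    then show ?thesis using Zbinom2_row by simp
  qed
  then show ?thesis by (subst F) (rule Zbinom2_sum)
qed

lemma Zbinom2_iff: "F \<in> Zbinom2 \<longleftrightarrow> iv2 F"
  using Zbinom2_iv2 iv2_Zbinom2 by blast



lemma vcong_refl[simp]: "vcong r a a" by (simp add: vcong_def)
lemma vcong_sym: "vcong r a b \<Longrightarrow> vcong r b a"
proof -
  assume "vcong r a b"
  then have "- ((a - b) / of_int r) \<in> \<int>" unfolding vcong_def by (rule Ints_minus)
  then show ?thesis unfolding vcong_def by (simp add: minus_divide_left)
qed
lemma vcong_trans: "vcong r a b \<Longrightarrow> vcong r b c \<Longrightarrow> vcong r a c"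
proof -
  assume "vcong r a b" "vcong r b c"
  then have "(a - b) / of_int r + (b - c) / of_int r \<in> \<int>" unfolding vcong_def by (rule Ints_add)
  then show ?thesis unfolding vcong_def by (simp add: add_divide_distrib[symmetric])
qed

lemma vcong_int: "r \<noteq> 0 \<Longrightarrow> vcong r (of_int a) (of_int b) \<longleftrightarrow> r dvd (a - b)"
proof
  assume r: "r \<noteq> 0" and "vcong r (of_int a) (of_int b)"
  then obtain k where k: "(of_int a - of_int b) / (of_int r :: rat) = of_int k"
    unfolding vcong_def by (auto elim: Ints_cases)
  then have "(of_int (a - b) :: rat) = of_int (k * r)" using r by (simp add: field_simps)
  then have "a - b = k * r" by linarith
  then show "r dvd (a - b)" by simp
next
  assume "r dvd (a - b)"
  then have "(of_int (a - b) :: rat) / of_int r \<in> \<int>" by (rule of_int_divide_in_Ints)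
  then show "vcong r (of_int a) (of_int b)" unfolding vcong_def by simp
qed

lemma cong1_iff: "cong1 r f g \<longleftrightarrow> (\<forall>x. vcong r (ev1 f x) (ev1 g x))"
  unfolding cong1_def Zbinom1_iff iv1_def vcong_def by simp

lemma cong2_iff: "cong2 r F G \<longleftrightarrow> (\<forall>x1 x2. vcong r (ev2 F x1 x2) (ev2 G x1 x2))"
  unfolding cong2_def Zbinom2_iff iv2_def vcong_def by (simp add: ev1_def)

definition Ud :: "int \<Rightarrow> (int \<Rightarrow> int) \<Rightarrow> int \<Rightarrow> int" where
  "Ud h \<psi> = (\<lambda>x. \<psi> (x + h) - \<psi> x)"

lemma telescope: "\<phi> (x + int m * h) - \<phi> x = (\<Sum>i<m. Ud h \<phi> (x + int i * h))"
  by (induction m) (simp_all add: Ud_def algebra_simps)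

lemma L_int:
  fixes \<phi> :: "int \<Rightarrow> int"
  assumes "coprime (int M) r"
  shows "(\<forall>x. r dvd \<phi> (x + int M * h) - \<phi> x) \<Longrightarrow> (Ud h ^^ n) \<phi> = (\<lambda>_. 0) \<Longrightarrow>
     \<forall>x. r dvd \<phi> (x + h) - \<phi> x"
proof (induction n arbitrary: \<phi>)
  case 0 then show ?case by simp
next
  case (Suc n)
  define \<psi> where "\<psi> = Ud h \<phi>"
  have per: "\<forall>x. r dvd \<psi> (x + int M * h) - \<psi> x"
  proof
    fix x
    have "\<psi> (x + int M * h) - \<psi> x = (\<phi> ((x + h) + int M * h) - \<phi> (x + h)) - (\<phi> (x + int M * h) - \<phi> x)"
      by (simp add: \<psi>_def Ud_def algebra_simps)
    moreover have "r dvd \<phi> ((x + h) + int M * h) - \<phi> (x + h)" using Suc.prems(1) by blast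
    moreover have "r dvd \<phi> (x + int M * h) - \<phi> x" using Suc.prems(1) by blast
    ultimately show "r dvd \<psi> (x + int M * h) - \<psi> x" by (simp add: dvd_diff)
  qed
  have "(Ud h ^^ n) \<psi> = (\<lambda>_. 0)" using Suc.prems(2)
    by (simp add: \<psi>_def funpow_Suc_right del: funpow.simps)
  then have c1: "\<forall>x. r dvd \<psi> (x + h) - \<psi> x" using Suc.IH per by blast
  have ci: "r dvd \<psi> (x + int i * h) - \<psi> x" for i x
  proof (induction i)
    case 0 then show ?case by simp
  next
    case (Suc i)
    have e: "\<psi> (x + int (Suc i) * h) - \<psi> x = (\<psi> ((x + int i * h) + h) - \<psi> (x + int i * h)) + (\<psi> (x + int i * h) - \<psi> x)"
      by (simp add: algebra_simps)
    have "r dvd \<psi> ((x + int i * h) + h) - \<psi> (x + int i * h)" using c1 by blast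
    then have "r dvd (\<psi> ((x + int i * h) + h) - \<psi> (x + int i * h)) + (\<psi> (x + int i * h) - \<psi> x)"
      using Suc.IH by (rule dvd_add)
    then show ?case unfolding e .
  qed
  show ?case
  proof
    fix x
    have "\<phi> (x + int M * h) - \<phi> x - int M * \<psi> x = (\<Sum>i<M. \<psi> (x + int i * h) - \<psi> x)"
      using telescope[of \<phi> x M h] by (simp add: \<psi>_def sum_subtractf)
    then have "r dvd \<phi> (x + int M * h) - \<phi> x - int M * \<psi> x"
      using ci by (simp add: dvd_sum)
    moreover have "r dvd \<phi> (x + int M * h) - \<phi> x" using Suc.prems(1) by blast
    ultimately have "r dvd (\<phi> (x + int M * h) - \<phi> x) - (\<phi> (x + int M * h) - \<phi> x - int M * \<psi> x)"
      by (rule dvd_diff[rotated])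
    then have "r dvd int M * \<psi> x" by simp
    moreover have "coprime r (int M)" using assms by (simp add: coprime_commute)
    ultimately have "r dvd \<psi> x" by (simp add: coprime_dvd_mult_right_iff)
    then show "r dvd \<phi> (x + h) - \<phi> x" by (simp add: \<psi>_def Ud_def)
  qed
qed

lemma Ud_poly:
  assumes "\<And>x. of_int (\<phi> x) = ev1 f x"
  shows "of_int ((Ud h ^^ n) \<phi> x) = poly ((Dsh (of_int h) ^^ n) f) (of_int x)"
proof (induction n arbitrary: x)
  case 0 then show ?case using assms by (simp add: ev1_def)
next
  case (Suc n)
  then show ?case by (simp add: Ud_def)
qed

lemma L1:
  fixes f :: "rat poly"
  assumes "iv1 f" "coprime (int M) r" "r \<noteq> 0"
    and "\<forall>x. vcong r (ev1 f (x + int M * h)) (ev1 f x)"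
  shows "\<forall>x. vcong r (ev1 f (x + h)) (ev1 f x)"
proof -
  define \<phi> where "\<phi> x = \<lfloor>ev1 f x\<rfloor>" for x
  have \<phi>: "of_int (\<phi> x) = ev1 f x" for x
  proof -
    from assms(1) have "ev1 f x \<in> \<int>" unfolding iv1_def by blast
    then obtain k where "ev1 f x = of_int k" by (auto elim: Ints_cases)
    then show ?thesis unfolding \<phi>_def by simp
  qed
  have "(Ud h ^^ Suc (degree f)) \<phi> = (\<lambda>_. 0)"
  proof
    fix x
    have v: "(Dsh (of_int h) ^^ Suc (degree f)) f = 0" by (rule Dsh_pow_vanish) simp
    have "(of_int ((Ud h ^^ Suc (degree f)) \<phi> x) :: rat) = poly ((Dsh (of_int h) ^^ Suc (degree f)) f) (of_int x)"
      by (rule Ud_poly) (rule \<phi>)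
    also have "\<dots> = 0" unfolding v by simp
    finally have "(of_int ((Ud h ^^ Suc (degree f)) \<phi> x) :: rat) = 0" .
    then show "(Ud h ^^ Suc (degree f)) \<phi> x = 0" by simp
  qed
  moreover have "\<forall>x. r dvd \<phi> (x + int M * h) - \<phi> x"
  proof
    fix x
    have "vcong r (of_int (\<phi> (x + int M * h))) (of_int (\<phi> x))" using assms(4) by (simp only: \<phi>)
    then show "r dvd \<phi> (x + int M * h) - \<phi> x" using vcong_int[OF assms(3)] by blast
  qed
  ultimately have "\<forall>x. r dvd \<phi> (x + h) - \<phi> x" using L_int[OF assms(2)] by blast
  then show ?thesis using vcong_int[OF assms(3)] by (simp only: \<phi>[symmetric]) blast
qed

lemma per_nat:
  fixes g :: "int \<Rightarrow> rat" and q x :: int and k :: nat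
  assumes "\<forall>x. vcong r (g (x + q)) (g x)"
  shows "vcong r (g (x + int k * q)) (g x)"
proof (induction k)
  case 0 then show ?case by simp
next
  case (Suc k)
  have "g (x + int (Suc k) * q) = g ((x + int k * q) + q)" by (simp add: algebra_simps)
  moreover have "vcong r (g ((x + int k * q) + q)) (g (x + int k * q))" using assms by blast
  ultimately show ?case using Suc.IH vcong_trans by simp
qed

lemma per_int:
  fixes g :: "int \<Rightarrow> rat" and q x k :: int
  assumes "\<forall>x. vcong r (g (x + q)) (g x)"
  shows "vcong r (g (x + k * q)) (g x)"
proof (cases "k \<ge> 0")
  case True
  then show ?thesis using per_nat[OF assms, of x "nat k"] by simp
next
  case False
  have e: "(x + k * q) + int (nat (-k)) * q = x" using False by (simp add: algebra_simps)
  have "vcong r (g ((x + k * q) + int (nat (-k)) * q)) (g (x + k * q))" by (rule per_nat[OF assms])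
  then have "vcong r (g x) (g (x + k * q))" unfolding e .
  then show ?thesis by (rule vcong_sym)
qed

lemma per2_shift:
  assumes "per2 r q1 q2 F"
  shows "vcong r (ev2 F (x1 + k1 * q1) (x2 + k2 * q2)) (ev2 F x1 x2)"
proof -
  have a: "\<forall>y. vcong r (ev2 F (y + q1) x2') (ev2 F y x2')" for x2'
    using assms unfolding per2_def by blast
  have b: "\<forall>y. vcong r (ev2 F x1 (y + q2)) (ev2 F x1 y)"
    using assms unfolding per2_def by blast
  have "vcong r (ev2 F (x1 + k1 * q1) (x2 + k2 * q2)) (ev2 F x1 (x2 + k2 * q2))"
    using per_int[OF a[of "x2 + k2 * q2"]] by blast
  moreover have "vcong r (ev2 F x1 (x2 + k2 * q2)) (ev2 F x1 x2)"
    using per_int[OF b] by blast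
  ultimately show ?thesis by (rule vcong_trans)
qed



lemma L1_per:
  fixes f :: "rat poly" and a b r :: int
  assumes "iv1 f" "b \<ge> 1" "gcd b r = 1" "r \<noteq> 0"
    and "\<forall>x. vcong r (ev1 f (x + a * b)) (ev1 f x)"
  shows "\<forall>x. vcong r (ev1 f (x + a)) (ev1 f x)"
proof -
  have cop: "coprime (int (nat b)) r" using assms(2,3) by (simp add: coprime_iff_gcd_eq_1)
  have e: "int (nat b) * a = a * b" using assms(2) by simp
  have "\<forall>x. vcong r (ev1 f (x + int (nat b) * a)) (ev1 f x)" unfolding e by (rule assms(5))
  then show ?thesis by (rule L1[OF assms(1) cop assms(4)])
qed

lemma dom1_facts:
  assumes "r1 \<ge> 2" "r2 \<ge> 2" "q1 \<ge> 1" "q2 \<ge> 1" "gcd q1 r2 = 1" "gcd q2 r1 = 1"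
    and "P \<in> dom1 r1 r2 (q1 * q2)"
  shows "iv1 (fst P)" "iv1 (snd P)"
    "\<forall>x. vcong r1 (ev1 (fst P) (x + q1)) (ev1 (fst P) x)"
    "\<forall>x. vcong r2 (ev1 (snd P) (x + q2)) (ev1 (snd P) x)"
proof -
  obtain P1 P2 where P: "P = (P1, P2)" by (cases P)
  have h: "P1 \<in> Zbinom1" "P2 \<in> Zbinom1" "per1 r1 (q1 * q2) P1" "per1 r2 (q1 * q2) P2"
    using assms(7) unfolding P dom1_def by auto
  show i1: "iv1 (fst P)" "iv1 (snd P)" using h by (simp_all add: P Zbinom1_iff)
  show "\<forall>x. vcong r1 (ev1 (fst P) (x + q1)) (ev1 (fst P) x)"
    using L1_per[of P1 q2 r1 q1] h i1 assms(1,4,6) unfolding per1_def P by simp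
  show "\<forall>x. vcong r2 (ev1 (snd P) (x + q2)) (ev1 (snd P) x)"
    using L1_per[of P2 q1 r2 q2] h i1 assms(2,3,5) unfolding per1_def P by (simp add: mult.commute)
qed

lemma const_x2:
  assumes "iv2 F" "per2 r q1 q2 F" "q2 \<ge> 1" "gcd q2 r = 1" "r \<noteq> 0"
  shows "vcong r (ev2 F x1 y) (ev2 F x1 x2)"
proof -
  define g where "g = map_poly (\<lambda>q. poly q (of_int x1)) F"
  have e: "ev2 F x1 z = ev1 g z" for z unfolding g_def by (rule ev2_as_ev1)
  have "iv1 g" using assms(1) unfolding iv2_def iv1_def e[symmetric] by blast
  moreover have "\<forall>z. vcong r (ev1 g (z + 1 * q2)) (ev1 g z)"
    using assms(2) unfolding per2_def e[symmetric] by simp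
  ultimately have "\<forall>z. vcong r (ev1 g (z + 1)) (ev1 g z)"
    using L1_per[of g q2 r 1] assms(3,4,5) by blast
  then have "vcong r (ev1 g (x2 + (y - x2) * 1)) (ev1 g x2)" by (rule per_int)
  then show ?thesis unfolding e by simp
qed

lemma const_x1:
  assumes "iv2 F" "per2 r q1 q2 F" "q1 \<ge> 1" "gcd q1 r = 1" "r \<noteq> 0"
  shows "vcong r (ev2 F y x2) (ev2 F x1 x2)"
proof -
  define g where "g = poly F [:of_int x2:]"
  have e: "ev2 F z x2 = ev1 g z" for z unfolding g_def ev1_def ev2_def ..
  have "iv1 g" using assms(1) unfolding iv2_def iv1_def e[symmetric] by blast
  moreover have "\<forall>z. vcong r (ev1 g (z + 1 * q1)) (ev1 g z)"
    using assms(2) unfolding per2_def e[symmetric] by simp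
  ultimately have "\<forall>z. vcong r (ev1 g (z + 1)) (ev1 g z)"
    using L1_per[of g q1 r 1] assms(3,4,5) by blast
  then have "vcong r (ev1 g (x1 + (y - x1) * 1)) (ev1 g x1)" by (rule per_int)
  then show ?thesis unfolding e by simp
qed

lemma mod_shift:
  fixes x y q :: int
  assumes "x mod q = y mod q"
  shows "x = y + ((x - y) div q) * q"
proof -
  have "q dvd x - y" using assms by (simp add: mod_eq_dvd_iff)
  then show ?thesis by simp
qed



theorem theorem3p16:
  fixes r1 r2 q1 q2 :: int
  assumes "r1 \<ge> 2" and "r2 \<ge> 2" and "q1 \<ge> 1" and "q2 \<ge> 1"
    and "gcd q1 r2 = 1" and "gcd q2 r1 = 1"
  shows
    "(\<forall>P \<in> dom1 r1 r2 (q1 * q2). check P \<in> dom2 r1 r2 q1 q2)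
   \<and> (\<forall>Q \<in> dom2 r1 r2 q1 q2. restr Q \<in> dom1 r1 r2 (q1 * q2))
   \<and> (\<forall>P \<in> dom1 r1 r2 (q1 * q2). \<forall>P' \<in> dom1 r1 r2 (q1 * q2).
        Bcong1 r1 r2 P P' \<longrightarrow> Bcong2 r1 r2 (check P) (check P'))
   \<and> (\<forall>Q \<in> dom2 r1 r2 q1 q2. \<forall>Q' \<in> dom2 r1 r2 q1 q2.
        Bcong2 r1 r2 Q Q' \<longrightarrow> Bcong1 r1 r2 (restr Q) (restr Q'))
   \<and> (\<forall>P \<in> dom1 r1 r2 (q1 * q2). \<forall>P' \<in> dom1 r1 r2 (q1 * q2).
        Bcong2 r1 r2 (check (padd P P')) (padd (check P) (check P'))
      \<and> Bcong2 r1 r2 (check (pmul P P')) (pmul (check P) (check P')))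
   \<and> Bcong2 r1 r2 (check (1, 1)) (1, 1)
   \<and> (\<forall>P \<in> dom1 r1 r2 (q1 * q2). Bcong1 r1 r2 (restr (check P)) P)
   \<and> (\<forall>Q \<in> dom2 r1 r2 q1 q2. Bcong2 r1 r2 (check (restr Q)) Q)
   \<and> (gcd q1 q2 = 1 \<longrightarrow>
        (\<forall>P \<in> dom1 r1 r2 (q1 * q2). \<forall>x x1 x2.
           x mod q1 = x1 mod q1 \<and> x mod q2 = x2 mod q2 \<longrightarrow>
             vcong r1 (ev2 (fst (check P)) x1 x2) (ev1 (fst P) x)
           \<and> vcong r2 (ev2 (snd (check P)) x1 x2) (ev1 (snd P) x))
      \<and> (\<forall>Q \<in> dom2 r1 r2 q1 q2. \<forall>x x1 x2.
           x mod q1 = x1 mod q1 \<and> x mod q2 = x2 mod q2 \<longrightarrow>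
             vcong r1 (ev1 (fst (restr Q)) x) (ev2 (fst Q) x1 x2)
           \<and> vcong r2 (ev1 (snd (restr Q)) x) (ev2 (snd Q) x1 x2)))"
proof -
  note D1 = dom1_facts[OF assms]
  have r1: "r1 \<noteq> 0" and r2: "r2 \<noteq> 0" using assms by auto
  have dom2D: "iv2 (fst Q) \<and> iv2 (snd Q) \<and> per2 r1 q1 q2 (fst Q) \<and> per2 r2 q1 q2 (snd Q)"
    if "Q \<in> dom2 r1 r2 q1 q2" for Q
    using that by (cases Q) (simp add: dom2_def Zbinom2_iff)
  have c1: "\<forall>P \<in> dom1 r1 r2 (q1 * q2). check P \<in> dom2 r1 r2 q1 q2"
  proof
    fix P assume P: "P \<in> dom1 r1 r2 (q1 * q2)"
    note d = D1[OF P]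
    have "per2 r1 q1 q2 [:fst P:]" unfolding per2_def using d(3) by simp
    moreover have "per2 r2 q1 q2 (map_poly (\<lambda>u. [:u:]) (snd P))" unfolding per2_def using d(4) by simp
    moreover have "iv2 [:fst P:]" "iv2 (map_poly (\<lambda>u. [:u:]) (snd P))"
      using d(1,2) unfolding iv2_def iv1_def by simp_all
    ultimately show "check P \<in> dom2 r1 r2 q1 q2"
      unfolding check_def dom2_def by (simp add: Zbinom2_iff)
  qed
  have c2: "\<forall>Q \<in> dom2 r1 r2 q1 q2. restr Q \<in> dom1 r1 r2 (q1 * q2)"
  proof
    fix Q assume Q: "Q \<in> dom2 r1 r2 q1 q2"
    note d = dom2D[OF Q]
    have per: "per1 r (q1 * q2) (poly F [:0,1:])" if "per2 r q1 q2 F" for r F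
      unfolding per1_def ev1_restr using per2_shift[OF that, of _ q2 _ q1] by (simp add: mult.commute)
    have iv: "iv1 (poly F [:0,1:])" if "iv2 F" for F
      using that unfolding iv1_def iv2_def ev1_restr by blast
    show "restr Q \<in> dom1 r1 r2 (q1 * q2)"
      unfolding restr_def dom1_def using d per iv by (simp add: Zbinom1_iff)
  qed
  have c3: "\<forall>P \<in> dom1 r1 r2 (q1 * q2). \<forall>P' \<in> dom1 r1 r2 (q1 * q2).
        Bcong1 r1 r2 P P' \<longrightarrow> Bcong2 r1 r2 (check P) (check P')"
    unfolding Bcong1_def Bcong2_def cong1_iff cong2_iff check_def by simp
  have c4: "\<forall>Q \<in> dom2 r1 r2 q1 q2. \<forall>Q' \<in> dom2 r1 r2 q1 q2.
        Bcong2 r1 r2 Q Q' \<longrightarrow> Bcong1 r1 r2 (restr Q) (restr Q')"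
    unfolding Bcong1_def Bcong2_def cong1_iff cong2_iff restr_def by (simp add: ev1_restr)
  have c5: "\<forall>P \<in> dom1 r1 r2 (q1 * q2). \<forall>P' \<in> dom1 r1 r2 (q1 * q2).
        Bcong2 r1 r2 (check (padd P P')) (padd (check P) (check P'))
      \<and> Bcong2 r1 r2 (check (pmul P P')) (pmul (check P) (check P'))"
    unfolding Bcong2_def cong2_iff check_def padd_def pmul_def by (simp add: mult.commute)
  have c6: "Bcong2 r1 r2 (check (1, 1)) (1, 1)"
    unfolding Bcong2_def cong2_iff check_def by simp
  have c7: "\<forall>P \<in> dom1 r1 r2 (q1 * q2). Bcong1 r1 r2 (restr (check P)) P"
    unfolding Bcong1_def cong1_iff check_def restr_def by (simp add: ev1_restr)
  have c8: "\<forall>Q \<in> dom2 r1 r2 q1 q2. Bcong2 r1 r2 (check (restr Q)) Q"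
  proof
    fix Q assume Q: "Q \<in> dom2 r1 r2 q1 q2"
    note d = dom2D[OF Q]
    have "vcong r1 (ev2 (fst Q) x1 x1) (ev2 (fst Q) x1 x2)" for x1 x2
      by (rule const_x2) (use d r1 assms(4,6) in auto)
    moreover have "vcong r2 (ev2 (snd Q) x2 x2) (ev2 (snd Q) x1 x2)" for x1 x2
      by (rule const_x1) (use d r2 assms(3,5) in auto)
    ultimately show "Bcong2 r1 r2 (check (restr Q)) Q"
      unfolding Bcong2_def cong2_iff check_def restr_def by (simp add: ev1_restr)
  qed
  have c9: "gcd q1 q2 = 1 \<longrightarrow>
        (\<forall>P \<in> dom1 r1 r2 (q1 * q2). \<forall>x x1 x2.
           x mod q1 = x1 mod q1 \<and> x mod q2 = x2 mod q2 \<longrightarrow>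
             vcong r1 (ev2 (fst (check P)) x1 x2) (ev1 (fst P) x)
           \<and> vcong r2 (ev2 (snd (check P)) x1 x2) (ev1 (snd P) x))
      \<and> (\<forall>Q \<in> dom2 r1 r2 q1 q2. \<forall>x x1 x2.
           x mod q1 = x1 mod q1 \<and> x mod q2 = x2 mod q2 \<longrightarrow>
             vcong r1 (ev1 (fst (restr Q)) x) (ev2 (fst Q) x1 x2)
           \<and> vcong r2 (ev1 (snd (restr Q)) x) (ev2 (snd Q) x1 x2))"
  proof (intro impI conjI ballI allI)
    fix P x x1 x2 assume P: "P \<in> dom1 r1 r2 (q1 * q2)" and m: "x mod q1 = x1 mod q1 \<and> x mod q2 = x2 mod q2"
    note d = D1[OF P]
    have e1: "x1 = x + ((x1 - x) div q1) * q1" using m by (intro mod_shift) simp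
    have e2: "x2 = x + ((x2 - x) div q2) * q2" using m by (intro mod_shift) simp
    have "vcong r1 (ev1 (fst P) (x + ((x1 - x) div q1) * q1)) (ev1 (fst P) x)"
      by (rule per_int[OF d(3)])
    then show "vcong r1 (ev2 (fst (check P)) x1 x2) (ev1 (fst P) x)"
      unfolding check_def using e1 by simp
    have "vcong r2 (ev1 (snd P) (x + ((x2 - x) div q2) * q2)) (ev1 (snd P) x)"
      by (rule per_int[OF d(4)])
    then show "vcong r2 (ev2 (snd (check P)) x1 x2) (ev1 (snd P) x)"
      unfolding check_def using e2 by simp
  next
    fix Q x x1 x2 assume Q: "Q \<in> dom2 r1 r2 q1 q2" and m: "x mod q1 = x1 mod q1 \<and> x mod q2 = x2 mod q2"
    note d = dom2D[OF Q]
    have e1: "x = x1 + ((x - x1) div q1) * q1" using m by (intro mod_shift) simp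
    have e2: "x = x2 + ((x - x2) div q2) * q2" using m by (intro mod_shift) simp
    have "vcong r1 (ev2 (fst Q) (x1 + ((x - x1) div q1) * q1) (x2 + ((x - x2) div q2) * q2)) (ev2 (fst Q) x1 x2)"
      using d by (intro per2_shift) simp
    then show "vcong r1 (ev1 (fst (restr Q)) x) (ev2 (fst Q) x1 x2)"
      unfolding restr_def using e1 e2 by (simp add: ev1_restr)
    have "vcong r2 (ev2 (snd Q) (x1 + ((x - x1) div q1) * q1) (x2 + ((x - x2) div q2) * q2)) (ev2 (snd Q) x1 x2)"
      using d by (intro per2_shift) simp
    then show "vcong r2 (ev1 (snd (restr Q)) x) (ev2 (snd Q) x1 x2)"
      unfolding restr_def using e1 e2 by (simp add: ev1_restr)
  qed
  show ?thesis using c1 c2 c3 c4 c5 c6 c7 c8 c9 by blast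
qed

end
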